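(* The linear map $\varphi$ maps $\Sigma(B_n)$ into $\Sigma(A_{n-1})$ and, for every $J\subseteq\{0,1,\dots,n-1\}$, $$\varphi(Y_J)=\sum_{F\in\mathcal{F}_n,\ F\subseteq J\,\triangle\,(J+1)}2^{\#F}\,P_F.$$
   Context: $B_n$: signed permutations $w=w_1\dots w_n$, values ordered $\cdots<-2<-1<1<2<\cdots$, $w_0=0$; $\mathrm{Des}(w)=\{i\in\{0,\dots,n-1\}:w_i>w_{i+1}\}$; $Y_J=\sum_{\mathrm{Des}(w)=J}w\in\mathbb{Q}B_n$; $\Sigma(B_n)=\mathrm{span}\{Y_J\}$. $\Sigma(A_{n-1})\subseteq\mathbb{Q}\mathfrak{S}_n$ is the span of $\sum_{\mathrm{Des}(u)=J}u$, $J\subseteq[n-1]$, where $\mathrm{Des}(u)=\{i\in[n-1]:u_i>u_{i+1}\}$. $\varphi:\mathbb{Q}B_n\to\mathbb{Q}\mathfrak{S}_n$ is the linear extension of $w\mapsto|w_1|\dots|w_n|$. For $u\in\mathfrak{S}_n$, $\mathrm{Peak}(u)=\{i\in[n-1]:u_{i-1}<u_i>u_{i+1}\}$ with $u_0=0$; $\mathcal{F}_n$ is the set of subsets of $[n-1]$ with no two consecutive integers; $P_F=\sum_{\mathrm{Peak}(u)=F}u$. $J+1=\{j+1:j\in J\}$ and $\triangle$ is symmetric difference. *)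

theory Defs
  imports Complex_Main
begin

text \<open>Signed permutations w = w_1 ... w_n are represented as int lists of length n
  (w_i = w ! (i-1)); ordinary permutations u of [n] as int lists with values in {1..n}.
  Elements of the group algebras Q B_n and Q S_n are functions from such lists to rat
  (coefficient of each group element).\<close>

definition Bn :: "nat \<Rightarrow> int list set" where
  "Bn n = {w. length w = n \<and> distinct (map abs w) \<and> set (map abs w) = {1..int n}}"

definition Sn :: "nat \<Rightarrow> int list set" where
  "Sn n = {u. length u = n \<and> distinct u \<and> set u = {1..int n}}"

definition pos :: "int list \<Rightarrow> nat \<Rightarrow> int" where
  "pos w i = (if i = 0 then 0 else w ! (i - 1))"

definition DesB :: "int list \<Rightarrow> nat set" where
  "DesB w = {i. i < length w \<and> pos w i > pos w (Suc i)}"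

definition DesA :: "int list \<Rightarrow> nat set" where
  "DesA u = {i. 1 \<le> i \<and> i < length u \<and> pos u i > pos u (Suc i)}"

definition Peak :: "int list \<Rightarrow> nat set" where
  "Peak u = {i. 1 \<le> i \<and> i < length u \<and> pos u (i - 1) < pos u i \<and> pos u i > pos u (Suc i)}"

definition YB :: "nat \<Rightarrow> nat set \<Rightarrow> int list \<Rightarrow> rat" where
  "YB n J = (\<lambda>w. if w \<in> Bn n \<and> DesB w = J then 1 else 0)"

definition YA :: "nat \<Rightarrow> nat set \<Rightarrow> int list \<Rightarrow> rat" where
  "YA n J = (\<lambda>u. if u \<in> Sn n \<and> DesA u = J then 1 else 0)"

text \<open>Sigma(B_n): the Q-span of the Y_J, J \<subseteq> {0..n-1} (finite family, so
  the span is the set of all linear combinations).\<close>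
definition SigmaB :: "nat \<Rightarrow> (int list \<Rightarrow> rat) set" where
  "SigmaB n = {f. \<exists>c :: nat set \<Rightarrow> rat. f = (\<lambda>w. \<Sum>J\<in>Pow {0..<n}. c J * YB n J w)}"

definition SigmaA :: "nat \<Rightarrow> (int list \<Rightarrow> rat) set" where
  "SigmaA n = {f. \<exists>c :: nat set \<Rightarrow> rat. f = (\<lambda>u. \<Sum>J\<in>Pow {1..<n}. c J * YA n J u)}"

text \<open>The linear extension of w \<mapsto> |w_1| ... |w_n| from Q B_n to Q S_n.\<close>
definition phi :: "nat \<Rightarrow> (int list \<Rightarrow> rat) \<Rightarrow> (int list \<Rightarrow> rat)" where
  "phi n f = (\<lambda>u. \<Sum>w\<in>{w \<in> Bn n. map abs w = u}. f w)"

definition Fn :: "nat \<Rightarrow> nat set set" where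
  "Fn n = {F. F \<subseteq> {1..<n} \<and> (\<forall>i\<in>F. Suc i \<notin> F)}"

definition PF :: "nat \<Rightarrow> nat set \<Rightarrow> int list \<Rightarrow> rat" where
  "PF n F = (\<lambda>u. if u \<in> Sn n \<and> Peak u = F then 1 else 0)"

end

theory Submission
  imports Defs
begin

definition sv :: "bool \<Rightarrow> int \<Rightarrow> int" where "sv b a = (if b then - a else a)"
definition neglast :: "int list \<Rightarrow> bool" where "neglast w = (pos w (length w) < 0)"
definition dl :: "int list \<Rightarrow> bool" where
  "dl v = (2 \<le> length v \<and> pos v (length v - 1) > pos v (length v))"
definition lastJ :: "int list \<Rightarrow> nat set \<Rightarrow> bool" where
  "lastJ v J = (1 \<le> length v \<and> length v - 1 \<in> J)"
definition okc :: "int list \<Rightarrow> nat set \<Rightarrow> bool" where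
  "okc v J = (J \<subseteq> {..<length v} \<and> (\<forall>i\<in>Peak v. (i \<in> J) \<noteq> (i - 1 \<in> J)))"
definition Cnt :: "int list \<Rightarrow> nat set \<Rightarrow> bool \<Rightarrow> rat" where
  "Cnt v J b = (\<Sum>w\<in>{w. map abs w = v}. if DesB w = J \<and> neglast w = b then 1 else 0)"

lemma pos_snoc_le: "i \<le> length w \<Longrightarrow> pos (w@[y]) i = pos w i"
  by (auto simp: pos_def nth_append)

lemma pos_snoc_last: "pos (w@[y]) (Suc (length w)) = y"
  by (simp add: pos_def)

lemma DesB_snoc: "DesB (w@[y]) = DesB w \<union> (if pos w (length w) > y then {length w} else {})"
proof (rule set_eqI)
  fix i
  show "i \<in> DesB (w@[y]) \<longleftrightarrow> i \<in> DesB w \<union> (if pos w (length w) > y then {length w} else {})"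
  proof (cases "i < length w")
    case True
    then show ?thesis by (auto simp: DesB_def pos_snoc_le)
  next
    case False
    then show ?thesis
      by (cases "i = length w") (auto simp: DesB_def pos_snoc_le pos_snoc_last)
  qed
qed

lemma DesB_sub: "DesB w \<subseteq> {..<length w}"
  by (auto simp: DesB_def)

lemma Peak_sub: "Peak w \<subseteq> {1..<length w}"
  by (auto simp: Peak_def)

lemma Peak_snoc: "Peak (v@[x]) = Peak v \<union>
  (if 1 \<le> length v \<and> pos v (length v - 1) < pos v (length v) \<and> pos v (length v) > x
   then {length v} else {})"
proof (rule set_eqI)
  fix i
  show "i \<in> Peak (v@[x]) \<longleftrightarrow> i \<in> Peak v \<union>
    (if 1 \<le> length v \<and> pos v (length v - 1) < pos v (length v) \<and> pos v (length v) > x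
     then {length v} else {})"
  proof (cases "i < length v")
    case True
    then show ?thesis by (auto simp: Peak_def pos_snoc_le)
  next
    case False
    then show ?thesis
      by (cases "i = length v") (auto simp: Peak_def pos_snoc_le pos_snoc_last)
  qed
qed

lemma finite_W: "finite {w. map abs w = (v::int list)}"
proof -
  let ?S = "set v \<union> uminus ` set v"
  have "{w. map abs w = v} \<subseteq> {w. set w \<subseteq> ?S \<and> length w = length v}"
  proof
    fix w assume "w \<in> {w. map abs w = (v::int list)}"
    hence h: "map abs w = v" by simp
    have "set w \<subseteq> ?S"
    proof
      fix y assume "y \<in> set w"
      hence "abs y \<in> set v" using h by force
      thus "y \<in> ?S" by (cases "y \<ge> 0") (auto simp: image_iff intro: bexI[of _ "abs y"])
    qed
    moreover have "length w = length v" using h by force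
    ultimately show "w \<in> {w. set w \<subseteq> ?S \<and> length w = length v}" by simp
  qed
  moreover have "finite {w. set w \<subseteq> ?S \<and> length w = length v}"
    by (rule finite_lists_length_eq) simp
  ultimately show ?thesis by (rule finite_subset)
qed

lemma W_snoc: "{w. map abs w = v @ [x]} = (\<lambda>(w,y). w @ [y]) ` ({w. map abs w = v} \<times> {y. abs y = (x::int)})"
proof
  show "{w. map abs w = v @ [x]} \<subseteq> (\<lambda>(w,y). w @ [y]) ` ({w. map abs w = v} \<times> {y. abs y = x})"
  proof
    fix w assume "w \<in> {w. map abs w = v @ [x]}"
    hence h: "map abs w = v @ [x]" by simp
    hence ne: "w \<noteq> []" by auto
    have w: "w = butlast w @ [last w]" using ne by simp
    have "map abs (butlast w) @ [abs (last w)] = v @ [x]" using h w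
      by (metis map_append list.simps(8) list.simps(9))
    hence "map abs (butlast w) = v" "abs (last w) = x" by auto
    thus "w \<in> (\<lambda>(w,y). w @ [y]) ` ({w. map abs w = v} \<times> {y. abs y = x})"
      using w by (auto intro!: image_eqI[of _ _ "(butlast w, last w)"])
  qed
qed auto

lemma sum_W_snoc:
  fixes x :: int
  assumes "x > 0"
  shows "(\<Sum>w\<in>{w. map abs w = v @ [x]}. f w) = (\<Sum>w\<in>{w. map abs w = v}. f (w @ [x]) + f (w @ [- x]))"
proof -
  have inj: "inj_on (\<lambda>(w,y). w @ [y]) ({w. map abs w = v} \<times> {y. abs y = x})"
    by (auto simp: inj_on_def)
  have xs: "{y. abs y = x} = {x, -x}" using assms by auto
  have "(\<Sum>w\<in>{w. map abs w = v @ [x]}. f w) = (\<Sum>(w,y)\<in>{w. map abs w = v} \<times> {y. abs y = x}. f (w @ [y]))"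
    unfolding W_snoc by (subst sum.reindex[OF inj]) (simp add: case_prod_unfold)
  also have "\<dots> = (\<Sum>w\<in>{w. map abs w = v}. \<Sum>y\<in>{y. abs y = x}. f (w @ [y]))"
    by (rule sum.cartesian_product[symmetric])
  also have "\<dots> = (\<Sum>w\<in>{w. map abs w = v}. f (w @ [x]) + f (w @ [- x]))"
    using assms by (simp add: xs)
  finally show ?thesis .
qed

lemma pos_abs: "map abs w = v \<Longrightarrow> i \<le> length w \<Longrightarrow> abs (pos w i) = pos v i"
  by (auto simp: pos_def)

lemma pos_last_sv: "map abs w = v \<Longrightarrow> pos w (length w) = sv (neglast w) (pos v (length v))"
proof -
  assume h: "map abs w = v"
  have "abs (pos w (length w)) = pos v (length v)" using pos_abs[OF h, of "length w"] h by auto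
  thus ?thesis by (auto simp: sv_def neglast_def)
qed


lemma DesB_snoc_eq:
  "DesB (w@[y]) = J \<longleftrightarrow> DesB w = J - {length w} \<and> ((length w \<in> J) = (pos w (length w) > y))"
  using DesB_sub[of w] unfolding DesB_snoc by auto

lemma neglast_snoc: "neglast (w@[y]) = (y < 0)"
  by (simp add: neglast_def pos_def)

lemma Cnt_snoc:
  fixes x :: int
  assumes "x > 0"
  shows "Cnt (v@[x]) J b =
    (if (length v \<in> J) = (sv False (pos v (length v)) > sv b x) then Cnt v (J - {length v}) False else 0) +
    (if (length v \<in> J) = (sv True (pos v (length v)) > sv b x) then Cnt v (J - {length v}) True else 0)"
proof -
  let ?k = "length v" and ?a = "pos v (length v)" and ?J' = "J - {length v}"
  have pw: "((if DesB (w@[x]) = J \<and> neglast (w@[x]) = b then 1 else 0) +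
            (if DesB (w@[-x]) = J \<and> neglast (w@[-x]) = b then 1 else 0) :: rat) =
    (if (?k \<in> J) = (sv False ?a > sv b x) then (if DesB w = ?J' \<and> neglast w = False then 1 else 0) else 0) +
    (if (?k \<in> J) = (sv True ?a > sv b x) then (if DesB w = ?J' \<and> neglast w = True then 1 else 0) else 0)"
    if h: "map abs w = v" for w
  proof -
    have lw: "length w = ?k" using h by auto
    have p: "pos w ?k = sv (neglast w) ?a" using pos_last_sv[OF h] lw by simp
    show ?thesis using assms
      by (cases b; cases "neglast w") (auto simp: DesB_snoc_eq neglast_snoc lw p sv_def)
  qed
  have "Cnt (v@[x]) J b = (\<Sum>w\<in>{w. map abs w = v}.
      (if DesB (w@[x]) = J \<and> neglast (w@[x]) = b then 1 else 0) +
      (if DesB (w@[-x]) = J \<and> neglast (w@[-x]) = b then 1 else 0))"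
    unfolding Cnt_def by (rule sum_W_snoc[OF assms])
  also have "\<dots> = (\<Sum>w\<in>{w. map abs w = v}.
    (if (?k \<in> J) = (sv False ?a > sv b x) then (if DesB w = ?J' \<and> neglast w = False then 1 else 0) else 0) +
    (if (?k \<in> J) = (sv True ?a > sv b x) then (if DesB w = ?J' \<and> neglast w = True then 1 else 0) else 0))"
    by (rule sum.cong) (auto simp: pw)
  also have "\<dots> = (if (?k \<in> J) = (sv False ?a > sv b x) then Cnt v ?J' False else 0) +
    (if (?k \<in> J) = (sv True ?a > sv b x) then Cnt v ?J' True else 0)"
    unfolding Cnt_def sum.distrib by simp
  finally show ?thesis .
qed

lemma Cnt_closed:
  "(\<forall>y\<in>set v. y > 0) \<Longrightarrow> distinct v \<Longrightarrow>
   Cnt v J b = (if okc v J then 2 ^ card (Peak v) *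
      (if dl v then 1/2 else (if b = lastJ v J then 1 else 0)) else 0)"
proof (induction v arbitrary: J b rule: rev_induct)
  case Nil
  have W: "{w. map abs w = ([]::int list)} = {[]}" by auto
  show ?case
    by (auto simp: Cnt_def W okc_def Peak_def dl_def lastJ_def DesB_def neglast_def pos_def)
next
  case (snoc x v)
  define k where "k = length v"
  define a where "a = pos v k"
  define J' where "J' = J - {k}"
  have xpos: "x > 0" using snoc.prems by auto
  have vpos: "\<forall>y\<in>set v. y > 0" and dv: "distinct v" using snoc.prems by auto
  have IH: "\<And>b. Cnt v J' b = (if okc v J' then 2 ^ card (Peak v) *
      (if dl v then 1/2 else (if b = lastJ v J' then 1 else 0)) else 0)"
    using snoc.IH[OF vpos dv] by blast
  have amem: "k \<ge> 1 \<Longrightarrow> a \<in> set v" by (auto simp: a_def pos_def k_def)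
  have ak: "k = 0 \<Longrightarrow> a = 0" by (simp add: a_def pos_def)
  have ak1: "k \<ge> 1 \<Longrightarrow> a > 0" using amem vpos by auto
  have a0: "a \<ge> 0" using ak ak1 by (cases "k = 0") auto
  have ax: "a \<noteq> x"
  proof
    assume "a = x"
    hence "k \<ge> 1" using ak xpos by force
    hence "a \<in> set v" by (auto simp: a_def pos_def k_def)
    thus False using snoc.prems(2) \<open>a = x\<close> by auto
  qed
  have aprev: "k \<ge> 2 \<Longrightarrow> pos v (k - 1) \<noteq> a"
  proof
    assume "k \<ge> 2" "pos v (k - 1) = a"
    hence "v ! (k - 2) = v ! (k - 1)" by (auto simp: a_def pos_def numeral_2_eq_2)
    moreover have "k - 2 \<noteq> k - 1" "k - 2 < length v" "k - 1 < length v" using \<open>k \<ge> 2\<close> k_def by auto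
    ultimately show False using dv by (simp add: nth_eq_iff_index_eq)
  qed
  have dlk: "dl v \<Longrightarrow> k \<ge> 1" by (auto simp: dl_def k_def)
  define np where "np = (1 \<le> k \<and> pos v (k - 1) < a \<and> a > x)"
  have np_iff: "np \<longleftrightarrow> \<not> dl v \<and> k \<ge> 1 \<and> a > x"
  proof (cases "k \<ge> 2")
    case True
    then show ?thesis using aprev[OF True] by (auto simp: np_def dl_def k_def a_def)
  next
    case False
    then show ?thesis using ak1 by (auto simp: np_def dl_def k_def a_def pos_def)
  qed
  have Pk: "Peak (v@[x]) = Peak v \<union> (if np then {k} else {})"
    unfolding Peak_snoc np_def k_def a_def ..
  have kP: "k \<notin> Peak v" using Peak_sub[of v] by (auto simp: k_def)
  have cardP: "card (Peak (v@[x])) = card (Peak v) + (if np then 1 else 0)"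
    using kP by (simp add: Pk finite_subset[OF Peak_sub])
  have ok_iff: "okc (v@[x]) J \<longleftrightarrow> okc v J' \<and> (np \<longrightarrow> (k \<in> J) \<noteq> (k - 1 \<in> J))"
  proof -
    have s: "J \<subseteq> {..<length (v@[x])} \<longleftrightarrow> J' \<subseteq> {..<length v}"
      by (auto simp: J'_def k_def)
    have t: "\<forall>i\<in>Peak v. ((i \<in> J) \<noteq> (i - 1 \<in> J)) = ((i \<in> J') \<noteq> (i - 1 \<in> J'))"
      using Peak_sub[of v] by (force simp: J'_def k_def)
    have u: "np \<Longrightarrow> k \<ge> 1" by (simp add: np_def)
    show ?thesis unfolding okc_def Pk using s t u by auto
  qed
  have dl_new: "dl (v@[x]) \<longleftrightarrow> k \<ge> 1 \<and> a > x"
    by (auto simp: dl_def k_def a_def pos_snoc_le pos_snoc_last)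
  have lJ: "lastJ v J' \<longleftrightarrow> k \<ge> 1 \<and> k - 1 \<in> J" by (auto simp: lastJ_def J'_def k_def)
  have lJn: "lastJ (v@[x]) J \<longleftrightarrow> k \<in> J" by (auto simp: lastJ_def k_def)
  have rec: "Cnt (v@[x]) J b =
    (if (k \<in> J) = (sv False a > sv b x) then Cnt v J' False else 0) +
    (if (k \<in> J) = (sv True a > sv b x) then Cnt v J' True else 0)"
    unfolding k_def a_def J'_def by (rule Cnt_snoc[OF xpos])
  show ?case
  proof (cases "a > x")
    case True
    have c: "\<And>b'. (sv b' a > sv b x) = (\<not> b')" using True xpos a0 by (auto simp: sv_def)
    show ?thesis
    proof (cases "dl v")
      case True
      then show ?thesis using \<open>a > x\<close> dlk np_iff
        by (simp add: rec c IH ok_iff cardP dl_new)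
    next
      case False
      have "k \<ge> 1" using \<open>a > x\<close> ak xpos by (cases "k = 0") auto
      then show ?thesis using \<open>a > x\<close> np_iff False
        by (simp add: rec c IH ok_iff cardP dl_new lJ)
    qed
  next
    case False
    hence lt: "a < x" using ax by auto
    have c: "\<And>b'. (sv b' a > sv b x) = b" using lt xpos a0 by (auto simp: sv_def)
    show ?thesis
      using lt np_iff by (simp add: rec c IH ok_iff cardP dl_new lJ lJn)
  qed
qed

lemma Bn_abs: "w \<in> Bn n \<Longrightarrow> map abs w \<in> Sn n"
  by (auto simp: Bn_def Sn_def)

lemma phi_notSn: "u \<notin> Sn n \<Longrightarrow> phi n g u = 0"
proof -
  assume "u \<notin> Sn n"
  hence e: "{w \<in> Bn n. map abs w = u} = {}" using Bn_abs by blast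
  show ?thesis unfolding phi_def e by simp
qed

lemma Sn_W: "u \<in> Sn n \<Longrightarrow> {w \<in> Bn n. map abs w = u} = {w. map abs w = u}"
  by (auto simp: Bn_def Sn_def)

lemma Sn_pos: "u \<in> Sn n \<Longrightarrow> \<forall>y\<in>set u. y > 0"
  by (auto simp: Sn_def)

lemma Sn_distinct: "u \<in> Sn n \<Longrightarrow> distinct u"
  by (auto simp: Sn_def)

lemma Sn_len: "u \<in> Sn n \<Longrightarrow> length u = n"
  by (auto simp: Sn_def)

definition Sym :: "nat set \<Rightarrow> nat set" where
  "Sym J = (J \<union> Suc ` J) - (J \<inter> Suc ` J)"

lemma phi_YB:
  assumes u: "u \<in> Sn n" and J: "J \<subseteq> {0..<n}"
  shows "phi n (YB n J) u = (if Peak u \<subseteq> Sym J then 2 ^ card (Peak u) else 0)"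
proof -
  have "phi n (YB n J) u = (\<Sum>w\<in>{w. map abs w = u}. if DesB w = J then 1 else 0)"
    unfolding phi_def Sn_W[OF u] YB_def
    by (rule sum.cong) (use Sn_W[OF u] in auto)
  also have "\<dots> = Cnt u J False + Cnt u J True"
    unfolding Cnt_def sum.distrib[symmetric] by (rule sum.cong) auto
  also have "\<dots> = (if okc u J then 2 ^ card (Peak u) else 0)"
    using Cnt_closed[OF Sn_pos[OF u] Sn_distinct[OF u]] by simp
  also have "okc u J \<longleftrightarrow> Peak u \<subseteq> Sym J"
  proof -
    have "J \<subseteq> {..<length u}" using J Sn_len[OF u] by auto
    moreover have "\<forall>i\<in>Peak u. ((i \<in> J) \<noteq> (i - 1 \<in> J)) = (i \<in> Sym J)"
    proof
      fix i assume "i \<in> Peak u"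
      hence "i \<ge> 1" by (auto simp: Peak_def)
      hence "i \<in> Suc ` J \<longleftrightarrow> i - 1 \<in> J" by (cases i) auto
      thus "((i \<in> J) \<noteq> (i - 1 \<in> J)) = (i \<in> Sym J)" by (auto simp: Sym_def)
    qed
    ultimately show ?thesis by (auto simp: okc_def)
  qed
  finally show ?thesis .
qed

lemma Peak_Fn: "u \<in> Sn n \<Longrightarrow> Peak u \<in> Fn n"
  using Sn_len[of u n] by (auto simp: Fn_def Peak_def)

lemma rhs_eval:
  "(\<Sum>F\<in>{F \<in> Fn n. F \<subseteq> Sym J}. 2 ^ card F * PF n F u) =
   (if u \<in> Sn n \<and> Peak u \<subseteq> Sym J then 2 ^ card (Peak u) else (0::rat))"
proof -
  have fin: "finite {F \<in> Fn n. F \<subseteq> Sym J}"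
    by (rule finite_subset[of _ "Pow {1..<n}"]) (auto simp: Fn_def)
  have "(\<Sum>F\<in>{F \<in> Fn n. F \<subseteq> Sym J}. 2 ^ card F * PF n F u) =
        (\<Sum>F\<in>{F \<in> Fn n. F \<subseteq> Sym J}. if F = Peak u then (if u \<in> Sn n then 2 ^ card F else 0) else 0)"
    by (rule sum.cong) (auto simp: PF_def)
  also have "\<dots> = (if u \<in> Sn n \<and> Peak u \<subseteq> Sym J then 2 ^ card (Peak u) else 0)"
    using fin Peak_Fn[of u n] by (simp add: sum.delta)
  finally show ?thesis .
qed

definition pk :: "nat set \<Rightarrow> nat set" where
  "pk K = {i \<in> K. i = 1 \<or> i - 1 \<notin> K}"

lemma Peak_pk:
  assumes u: "u \<in> Sn n"
  shows "Peak u = pk (DesA u)"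
proof (rule set_eqI)
  fix i
  have pos: "\<forall>y\<in>set u. y > 0" and d: "distinct u" and l: "length u = n"
    using Sn_pos[OF u] Sn_distinct[OF u] Sn_len[OF u] by auto
  show "i \<in> Peak u \<longleftrightarrow> i \<in> pk (DesA u)"
  proof (cases "i = 1")
    case True
    have "pos u 1 > 0" if "1 < length u"
    proof -
      have "u ! 0 \<in> set u" using that by (cases u) auto
      thus ?thesis using pos by (auto simp: pos_def)
    qed
    then show ?thesis using True by (auto simp: Peak_def pk_def DesA_def pos_def[of _ 0])
  next
    case False
    show ?thesis
    proof (cases "i \<ge> 2 \<and> i < length u")
      case True
      have ne: "pos u (i - 1) \<noteq> pos u i"
      proof
        assume "pos u (i - 1) = pos u i"
        hence "u ! (i - 2) = u ! (i - 1)" using True by (auto simp: pos_def numeral_2_eq_2)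
        moreover have "i - 2 \<noteq> i - 1" "i - 2 < length u" "i - 1 < length u" using True by auto
        ultimately show False using d by (simp add: nth_eq_iff_index_eq)
      qed
      have "Suc (i - 1) = i" using True by auto
      then show ?thesis using True False ne
        by (auto simp: Peak_def pk_def DesA_def)
    next
      case False
      then show ?thesis using \<open>i \<noteq> 1\<close> by (auto simp: Peak_def pk_def DesA_def)
    qed
  qed
qed

lemma DesA_sub: "u \<in> Sn n \<Longrightarrow> DesA u \<in> Pow {1..<n}"
  using Sn_len[of u n] by (auto simp: DesA_def)


theorem proposition3p2:
  fixes n :: nat
  shows "(\<forall>f\<in>SigmaB n. phi n f \<in> SigmaA n) \<and>
    (\<forall>J. J \<subseteq> {0..<n} \<longrightarrow>
       phi n (YB n J) =
       (\<lambda>u. \<Sum>F\<in>{F \<in> Fn n. F \<subseteq> (J \<union> Suc ` J) - (J \<inter> Suc ` J)}.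
               2 ^ card F * PF n F u))"
proof (intro conjI allI impI ballI)
  fix J :: "nat set" assume J: "J \<subseteq> {0..<n}"
  show "phi n (YB n J) =
       (\<lambda>u. \<Sum>F\<in>{F \<in> Fn n. F \<subseteq> (J \<union> Suc ` J) - (J \<inter> Suc ` J)}.
               2 ^ card F * PF n F u)"
  proof
    fix u
    show "phi n (YB n J) u = (\<Sum>F\<in>{F \<in> Fn n. F \<subseteq> (J \<union> Suc ` J) - (J \<inter> Suc ` J)}.
               2 ^ card F * PF n F u)"
      using rhs_eval[where n=n and J=J and u=u] phi_YB[where u=u and n=n and J=J, OF _ J] phi_notSn[where u=u and n=n]
      unfolding Sym_def by (cases "u \<in> Sn n") simp_all
  qed
next
  fix f assume "f \<in> SigmaB n"
  then obtain c where f: "f = (\<lambda>w. \<Sum>J\<in>Pow {0..<n}. c J * YB n J w)"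
    by (auto simp: SigmaB_def)
  define c' where "c' K = (\<Sum>J\<in>Pow {0..<n}. c J * (if pk K \<subseteq> Sym J then 2 ^ card (pk K) else 0))"
    for K
  have "phi n f = (\<lambda>u. \<Sum>K\<in>Pow {1..<n}. c' K * YA n K u)"
  proof
    fix u
    show "phi n f u = (\<Sum>K\<in>Pow {1..<n}. c' K * YA n K u)"
    proof (cases "u \<in> Sn n")
      case False
      then show ?thesis using phi_notSn[of u n f] by (simp add: YA_def)
    next
      case True
      have "phi n f u = (\<Sum>J\<in>Pow {0..<n}. c J * phi n (YB n J) u)"
        unfolding phi_def f by (simp add: sum.swap[of _ "Pow {0..<n}"] sum_distrib_left)
      also have "\<dots> = c' (DesA u)"
        unfolding c'_def Peak_pk[OF True, symmetric]
        by (rule sum.cong) (auto simp: phi_YB[OF True])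
      also have "\<dots> = (\<Sum>K\<in>Pow {1..<n}. c' K * YA n K u)"
      proof -
        have "(\<Sum>K\<in>Pow {1..<n}. c' K * YA n K u) = (\<Sum>K\<in>Pow {1..<n}. if K = DesA u then c' K else 0)"
          by (rule sum.cong) (auto simp: YA_def True)
        also have "\<dots> = c' (DesA u)" using DesA_sub[OF True] by (simp add: sum.delta')
        finally show ?thesis by simp
      qed
      finally show ?thesis .
    qed
  qed
  thus "phi n f \<in> SigmaA n" by (auto simp: SigmaA_def)
qed

end
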